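(* Let $b\ge a>0$ and $m\in\mathbb{R}$, and let $f$ be a function on $(0,\infty)$ which is nonnegative and increasing on $(0,b)$ and satisfies $f(x)\ge m$ for $x\ge b$. Then for every $\xi>0$, \[f(a)\le\frac{e^{a\xi}\,\xi\,\mathcal{L}f(\xi)-m\,e^{-(b-a)\xi}}{1-e^{-(b-a)\xi}}.\]
   Context: $\mathcal{L}f(\xi)=\int_0^\infty e^{-\xi x}f(x)\,dx$ denotes the Laplace transform (assumed finite). *)

theory Defs
  imports "HOL-Analysis.Analysis"
begin

definition laplace :: "(real \<Rightarrow> real) \<Rightarrow> real \<Rightarrow> real" where
  "laplace f \<xi> = (LBINT x:{0<..}. exp (- \<xi> * x) * f x)"

end

theory Submission
  imports Defs "HOL-Probability.Sinc_Integral"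
begin

theorem proposition2p13:
  fixes f :: "real \<Rightarrow> real" and a b m \<xi> :: real
  assumes "0 < a" and "a < b"
    and "\<And>x. 0 < x \<Longrightarrow> x < b \<Longrightarrow> 0 \<le> f x"
    and "mono_on {0<..<b} f"
    and "\<And>x. b \<le> x \<Longrightarrow> m \<le> f x"
    and "0 < \<xi>"
    and "set_integrable lborel {0<..} (\<lambda>x. exp (- \<xi> * x) * f x)"
  shows "f a \<le> (exp (a * \<xi>) * \<xi> * laplace f \<xi> - m * exp (- (b - a) * \<xi>))
                 / (1 - exp (- (b - a) * \<xi>))"
proof -
  define F where "F = (\<lambda>x. exp (- \<xi> * x) * f x)"
  define E where "E = (\<lambda>x::real. exp (- \<xi> * x))"
  have FI: "set_integrable lborel {0<..} F" using assms(7) F_def by simp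
  have EI: "set_integrable lborel {0<..} E"
    using integrable_I0i_exp_mscale[OF assms(6)] unfolding E_def by (simp add: mult.commute)
  have Ec: "set_integrable lborel {c..} E \<and> (LINT x:{c..}|lborel. E x) = exp (- \<xi> * c) / \<xi>"
    if "c > 0" for c
  proof -
    have I: "set_integrable lborel {c..} E"
      by (rule set_integrable_subset[OF EI]) (use that in auto)
    have "(LINT x:{c..}|lborel. E x) = integral {c..} E"
      using set_borel_integral_eq_integral(2)[OF I] .
    also have "\<dots> = exp (- \<xi> * c) / \<xi>"
      using has_integral_exp_minus_to_infinity[OF assms(6), of c] unfolding E_def
      by (simp add: integral_unique)
    finally show ?thesis using I by simp
  qed
  have Ea: "set_integrable lborel {a..} E" and Eb: "set_integrable lborel {b..} E"
    using Ec assms(1,2) by auto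
  have Eab: "set_integrable lborel {a..<b} E"
    by (rule set_integrable_subset[OF Ea]) auto
  have "(LINT x:{a..}|lborel. E x) = (LINT x:{a..<b}|lborel. E x) + (LINT x:{b..}|lborel. E x)"
  proof -
    have "{a..} = {a..<b} \<union> {b..}" using assms(2) by auto
    moreover have "{a..<b} \<inter> {b..} = ({}::real set)" by auto
    ultimately show ?thesis using set_integral_Un[OF _ Eab Eb] by simp
  qed
  then have intEab: "(LINT x:{a..<b}|lborel. E x) = exp (- \<xi> * a) / \<xi> - exp (- \<xi> * b) / \<xi>"
    using Ec assms(1,2) by auto
  have F1: "set_integrable lborel {0<..<a} F" and F2: "set_integrable lborel {a..<b} F"
    and F3: "set_integrable lborel {b..} F"
    by (rule set_integrable_subset[OF FI]; use assms(1,2) in auto)+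
  have F23: "set_integrable lborel {a..} F"
    by (rule set_integrable_subset[OF FI]; use assms(1,2) in auto)
  have "laplace f \<xi> = (LINT x:{0<..}|lborel. F x)" unfolding laplace_def F_def by simp
  also have "\<dots> = (LINT x:{0<..<a}|lborel. F x) + (LINT x:{a..}|lborel. F x)"
  proof -
    have "{0<..} = {0<..<a} \<union> {a..}" using assms(1) by auto
    moreover have "{0<..<a} \<inter> {a..} = ({}::real set)" by auto
    ultimately show ?thesis using set_integral_Un[OF _ F1 F23] by simp
  qed
  also have "(LINT x:{a..}|lborel. F x) = (LINT x:{a..<b}|lborel. F x) + (LINT x:{b..}|lborel. F x)"
  proof -
    have "{a..} = {a..<b} \<union> {b..}" using assms(2) by auto
    moreover have "{a..<b} \<inter> {b..} = ({}::real set)" by auto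
    ultimately show ?thesis using set_integral_Un[OF _ F2 F3] by simp
  qed
  finally have L: "laplace f \<xi> = (LINT x:{0<..<a}|lborel. F x) + (LINT x:{a..<b}|lborel. F x)
     + (LINT x:{b..}|lborel. F x)" by simp
  have L1: "0 \<le> (LINT x:{0<..<a}|lborel. F x)"
  proof -
    have "(LINT x:{0<..<a}|lborel. (0::real)) \<le> (LINT x:{0<..<a}|lborel. F x)"
      by (rule set_integral_mono[OF _ F1]) (use assms(1-3) in \<open>auto simp: F_def set_integrable_def\<close>)
    then show ?thesis by (simp add: set_lebesgue_integral_def)
  qed
  have L2: "f a * (LINT x:{a..<b}|lborel. E x) \<le> (LINT x:{a..<b}|lborel. F x)"
  proof -
    have "(LINT x:{a..<b}|lborel. f a * E x) \<le> (LINT x:{a..<b}|lborel. F x)"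
    proof (rule set_integral_mono[OF _ F2])
      show "set_integrable lborel {a..<b} (\<lambda>x. f a * E x)"
        using Eab by (intro set_integrable_mult_right) auto
      fix x assume x: "x \<in> {a..<b}"
      have "f a \<le> f x"
        using assms(4) x assms(1) by (auto intro: mono_onD)
      then show "f a * E x \<le> F x" unfolding F_def E_def
        by (simp add: mult.commute mult_left_mono)
    qed
    then show ?thesis by simp
  qed
  have L3: "m * (LINT x:{b..}|lborel. E x) \<le> (LINT x:{b..}|lborel. F x)"
  proof -
    have "(LINT x:{b..}|lborel. m * E x) \<le> (LINT x:{b..}|lborel. F x)"
    proof (rule set_integral_mono[OF _ F3])
      show "set_integrable lborel {b..} (\<lambda>x. m * E x)"
        using Eb by (intro set_integrable_mult_right) auto
      fix x assume x: "x \<in> {b..}"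
      have "m \<le> f x" using assms(5) x by auto
      then show "m * E x \<le> F x" unfolding F_def E_def
        by (simp add: mult.commute mult_left_mono)
    qed
    then show ?thesis by simp
  qed
  have Eb': "(LINT x:{b..}|lborel. E x) = exp (- \<xi> * b) / \<xi>" using Ec assms(1,2) by auto
  have key: "f a * (exp (- \<xi> * a) - exp (- \<xi> * b)) + m * exp (- \<xi> * b) \<le> \<xi> * laplace f \<xi>"
  proof -
    have "f a * (exp (- \<xi> * a) / \<xi> - exp (- \<xi> * b) / \<xi>) + m * (exp (- \<xi> * b) / \<xi>) \<le> laplace f \<xi>"
      using L L1 L2 L3 unfolding intEab Eb' by linarith
    then have "\<xi> * (f a * (exp (- \<xi> * a) / \<xi> - exp (- \<xi> * b) / \<xi>) + m * (exp (- \<xi> * b) / \<xi>)) \<le> \<xi> * laplace f \<xi>"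
      using assms(6) by (simp add: mult_left_mono)
    moreover have "\<xi> * (f a * (exp (- \<xi> * a) / \<xi> - exp (- \<xi> * b) / \<xi>) + m * (exp (- \<xi> * b) / \<xi>))
       = f a * (exp (- \<xi> * a) - exp (- \<xi> * b)) + m * exp (- \<xi> * b)"
      using assms(6) by (simp add: field_simps)
    ultimately show ?thesis by simp
  qed
  have ea: "exp (a * \<xi>) * exp (- \<xi> * a) = 1" by (simp add: mult.commute flip: exp_add)
  have eb: "exp (a * \<xi>) * exp (- \<xi> * b) = exp (- (b - a) * \<xi>)"
    by (simp flip: exp_add) (simp add: algebra_simps)
  have key2: "f a * (1 - exp (- (b - a) * \<xi>)) + m * exp (- (b - a) * \<xi>) \<le> exp (a * \<xi>) * \<xi> * laplace f \<xi>"
  proof -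
    have "exp (a * \<xi>) * (f a * (exp (- \<xi> * a) - exp (- \<xi> * b)) + m * exp (- \<xi> * b))
          \<le> exp (a * \<xi>) * (\<xi> * laplace f \<xi>)"
      using key by (simp add: mult_left_mono)
    then show ?thesis using ea eb by (simp add: algebra_simps)
  qed
  have pos: "0 < 1 - exp (- (b - a) * \<xi>)" using assms(2,6) by (simp add: mult_neg_pos)
  show ?thesis using key2 pos by (simp add: pos_le_divide_eq)
qed

end
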